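(* Let $V$ be a finite-dimensional scalar product space and $T$ a self-adjoint operator on $V$. Fix an eigenvalue $\lambda$ of $T$ and let $U=(T-\lambda I)|_{K_\lambda}$. If $k\ge 0$ is an integer with $U^k\neq 0$, then there exists $x\in K_\lambda$ such that $\langle U^k x,x\rangle\neq 0$.
   Context: A scalar product is a non-degenerate symmetric bilinear form $\langle\cdot,\cdot\rangle$ over $\mathbb{R}$ or $\mathbb{C}$ (bilinear, not Hermitian, in the complex case). $T$ is self-adjoint if $\langle Tx,y\rangle=\langle x,Ty\rangle$ for all $x,y$. If $V$ is real, eigenvalues (possibly non-real) and generalized eigenspaces are taken in the complexification $V^{\mathbb{C}}$ with the complex-bilinear extension of the scalar product and of $T$. The generalized eigenspace is $K_\lambda=\{x:(T-\lambda I)^m x=0\text{ for some positive integer }m\}$. *)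

theory Defs
  imports "HOL-Analysis.Analysis"
begin

text \<open>A finite-dimensional complex vector space is modelled as complex^'n.
  A scalar product is a non-degenerate symmetric (complex-)bilinear form.\<close>

definition scalar_product :: "(complex^'n \<Rightarrow> complex^'n \<Rightarrow> complex) \<Rightarrow> bool" where
  "scalar_product B \<longleftrightarrow>
     (\<forall>x y z. B (x + y) z = B x z + B y z) \<and>
     (\<forall>c x y. B (c *s x) y = c * B x y) \<and>
     (\<forall>x y. B x y = B y x) \<and>
     (\<forall>x. (\<forall>y. B x y = 0) \<longrightarrow> x = 0)"

definition self_adjoint :: "(complex^'n \<Rightarrow> complex^'n \<Rightarrow> complex) \<Rightarrow> complex^'n^'n \<Rightarrow> bool" where
  "self_adjoint B T \<longleftrightarrow> (\<forall>x y. B (T *v x) y = B x (T *v y))"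

definition is_eigenvalue :: "complex^'n^'n \<Rightarrow> complex \<Rightarrow> bool" where
  "is_eigenvalue T l \<longleftrightarrow> (\<exists>x. x \<noteq> 0 \<and> T *v x = l *s x)"

definition shifted :: "complex^'n^'n \<Rightarrow> complex \<Rightarrow> complex^'n \<Rightarrow> complex^'n" where
  "shifted T l = (\<lambda>x. T *v x - l *s x)"

definition gen_eigenspace :: "complex^'n^'n \<Rightarrow> complex \<Rightarrow> (complex^'n) set" where
  "gen_eigenspace T l = {x. \<exists>m::nat. m > 0 \<and> (shifted T l ^^ m) x = 0}"

end

theory Submission
  imports Defs
begin
lemma pow_lin: "Vector_Spaces.linear (*s) (*s) (f::'a::field^'n \<Rightarrow> 'a^'n) \<Longrightarrow> Vector_Spaces.linear (*s) (*s) (f^^j)"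
  by (induction j) (auto intro: vec.linear_id Vector_Spaces.linear_compose)

lemma fitting:
  fixes S :: "'a::field^'n \<Rightarrow> 'a^'n"
  assumes lin: "Vector_Spaces.linear (*s) (*s) S"
  shows "\<exists>N. (\<forall>m x. (S^^m) x = 0 \<longrightarrow> (S^^N) x = 0) \<and> (\<forall>w. \<exists>a v. (S^^N) a = 0 \<and> w = a + (S^^N) v)"
proof -
  define ker where "ker j = {x. (S^^j) x = 0}" for j
  have lp: "\<And>j. Vector_Spaces.linear (*s) (*s) (S^^j)" using pow_lin[OF lin] .
  have sub: "\<And>j. vec.subspace (ker j)" unfolding ker_def by (rule vec.linear_subspace_kernel[OF lp])
  have mono: "ker i \<subseteq> ker j" if "i \<le> j" for i j
  proof
    fix x assume "x \<in> ker i"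
    have "(S^^j) x = (S^^(j-i)) ((S^^i) x)"
      using that by (metis funpow_add le_add_diff_inverse2 comp_apply)
    then show "x \<in> ker j" using \<open>x \<in> ker i\<close> vec.linear_0[OF lp] unfolding ker_def by simp
  qed
  define d where "d j = vec.dim (ker j)" for j
  have fin: "finite (range d)"
    by (rule finite_subset[of _ "{..CARD('n)}"]) (auto simp: d_def dim_subset_UNIV_cart_gen)
  obtain N where dN: "d N = Max (range d)"
    using Max_in[OF fin] by auto
  have le: "d j \<le> d N" for j using Max_ge[OF fin] dN by auto
  have stab: "ker j = ker N" if "N \<le> j" for j
    using vec.subspace_dim_equal[OF sub sub mono[OF that]] le[of j] unfolding d_def by auto
  have part1: "\<forall>m x. (S^^m) x = 0 \<longrightarrow> (S^^N) x = 0"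
  proof (intro allI impI)
    fix m x assume "(S^^m) x = 0"
    then have "x \<in> ker (max m N)" using mono[of m "max m N"] unfolding ker_def by auto
    then show "(S^^N) x = 0" using stab[of "max m N"] unfolding ker_def by auto
  qed
  define R where "R = range (S^^N)"
  have subR: "vec.subspace R" unfolding R_def
    by (rule vec.linear_subspace_image[OF lp vec.subspace_UNIV])
  have inj: "inj_on (S^^N) (vec.span R)"
  proof -
    have sp: "vec.span R = R" using subR vec.span_eq_iff by blast
    have "inj_on (S^^N) R"
    proof (rule inj_onI)
      fix u u' assume u: "u \<in> R" "u' \<in> R" "(S^^N) u = (S^^N) u'"
      have "u - u' \<in> R" using u subR vec.subspace_diff by blast
      then obtain v where v: "u - u' = (S^^N) v" unfolding R_def by auto
      have "(S^^N) (u - u') = 0" using u(3) vec.linear_diff[OF lp] by simp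
      then have "(S^^(N+N)) v = 0" using v by (simp add: funpow_add)
      then have "v \<in> ker N" using stab[of "N+N"] unfolding ker_def by auto
      then show "u = u'" using v unfolding ker_def by simp
    qed
    then show ?thesis unfolding sp .
  qed
  have img_sub: "(S^^N) ` R \<subseteq> R" unfolding R_def by auto
  have subI: "vec.subspace ((S^^N) ` R)" by (rule vec.linear_subspace_image[OF lp subR])
  have eqR: "(S^^N) ` R = R"
    using vec.subspace_dim_equal[OF subI subR img_sub] vec.dim_image_eq[OF lp inj] by simp
  have part2: "\<forall>w. \<exists>a v. (S^^N) a = 0 \<and> w = a + (S^^N) v"
  proof
    fix w
    have "(S^^N) w \<in> (S^^N) ` R" using eqR unfolding R_def by auto
    then obtain v where v: "(S^^N) w = (S^^N) ((S^^N) v)" unfolding R_def by auto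
    have "(S^^N) (w - (S^^N) v) = 0" using v vec.linear_diff[OF lp] by simp
    then show "\<exists>a v. (S^^N) a = 0 \<and> w = a + (S^^N) v"
      by (intro exI[of _ "w - (S^^N) v"] exI[of _ v]) simp
  qed
  show ?thesis using part1 part2 by blast
qed
lemma shifted_lin: "Vector_Spaces.linear (*s) (*s) (shifted T l)"
  unfolding Vector_Spaces.linear_iff shifted_def
  apply (intro conjI vec.vector_space_axioms allI)
  apply (simp add: matrix_vector_right_distrib vector_ssub_ldistrib)
  apply (simp add: vec.scale algebra_simps)
  done

theorem mainTheorem4:
  fixes B :: "complex^'n \<Rightarrow> complex^'n \<Rightarrow> complex"
    and T :: "complex^'n^'n" and l :: complex and k :: nat
  assumes "scalar_product B"
    and "self_adjoint B T"
    and "is_eigenvalue T l"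
    and "\<exists>y \<in> gen_eigenspace T l. (shifted T l ^^ k) y \<noteq> 0"
  shows "\<exists>x \<in> gen_eigenspace T l. B ((shifted T l ^^ k) x) x \<noteq> 0"
proof (rule ccontr)
  assume nc: "\<not> ?thesis"
  define S where "S = shifted T l"
  have lin: "Vector_Spaces.linear (*s) (*s) S" unfolding S_def by (rule shifted_lin)
  have lp: "\<And>j. Vector_Spaces.linear (*s) (*s) (S^^j)" using pow_lin[OF lin] .
  have addl: "\<And>x y z. B (x + y) z = B x z + B y z"
    and scl: "\<And>c x y. B (c *s x) y = c * B x y"
    and sym: "\<And>x y. B x y = B y x"
    and nd: "\<And>x. (\<forall>y. B x y = 0) \<Longrightarrow> x = 0"
    using assms(1) unfolding scalar_product_def by blast+
  have addr: "B z (x + y) = B z x + B z y" for x y z using addl sym by metis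
  have sclr: "B y (c *s x) = c * B y x" for c x y using scl sym by metis
  have zl: "B 0 y = 0" for y using scl[of 0 0 y] by simp
  have dl: "B (x - y) z = B x z - B y z" for x y z
    using addl[of "x - y" y z] by (simp add: algebra_simps)
  have dr: "B z (x - y) = B z x - B z y" for x y z using dl sym by metis
  have sa: "B (S x) y = B x (S y)" for x y
    using assms(2) unfolding self_adjoint_def S_def shifted_def
    by (simp add: dl dr scl sclr)
  have sak: "B ((S^^j) x) y = B x ((S^^j) y)" for j x y
  proof (induction j arbitrary: x y)
    case 0 then show ?case by simp
  next
    case (Suc j)
    have "B ((S^^Suc j) x) y = B ((S^^j) (S x)) y" by (simp add: funpow_swap1)
    also have "\<dots> = B (S x) ((S^^j) y)" using Suc by simp
    also have "\<dots> = B x ((S^^Suc j) y)" using sa by simp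
    finally show ?case .
  qed
  obtain N where N1: "\<And>m x. (S^^m) x = 0 \<Longrightarrow> (S^^N) x = 0"
    and N2: "\<And>w. \<exists>a v. (S^^N) a = 0 \<and> w = a + (S^^N) v"
    using fitting[OF lin] by blast
  have K: "x \<in> gen_eigenspace T l \<longleftrightarrow> (S^^N) x = 0" for x
  proof
    assume "x \<in> gen_eigenspace T l"
    then show "(S^^N) x = 0" using N1 unfolding gen_eigenspace_def S_def by blast
  next
    assume "(S^^N) x = 0"
    then have "(S^^Suc N) x = 0" using vec.linear_0[OF lin] by simp
    then show "x \<in> gen_eigenspace T l" unfolding gen_eigenspace_def S_def by blast
  qed
  obtain y where y: "y \<in> gen_eigenspace T l" "(S^^k) y \<noteq> 0"
    using assms(4) unfolding S_def by blast
  have z: "B ((S^^k) x) x = 0" if "x \<in> gen_eigenspace T l" for x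
    using nc that unfolding S_def by blast
  have orth: "B ((S^^k) y) u = 0" if u: "(S^^N) u = 0" for u
  proof -
    have yu: "(S^^N) (y + u) = 0" using y(1) u K vec.linear_add[OF lp] by simp
    have "0 = B ((S^^k) (y + u)) (y + u)" using z K yu by simp
    also have "\<dots> = B ((S^^k) y) y + B ((S^^k) y) u + B ((S^^k) u) y + B ((S^^k) u) u"
      by (simp add: vec.linear_add[OF lp] addl addr)
    also have "B ((S^^k) u) y = B ((S^^k) y) u" using sak sym by metis
    finally have "2 * B ((S^^k) y) u = 0" using z[of y] z[of u] y(1) u K by simp
    then show ?thesis by simp
  qed
  have "(S^^k) y = 0"
  proof (rule nd, rule allI)
    fix w
    obtain a v where av: "(S^^N) a = 0" "w = a + (S^^N) v" using N2 by blast
    have "B ((S^^k) y) ((S^^N) v) = B ((S^^N) ((S^^k) y)) v" using sak by metis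
    also have "(S^^N) ((S^^k) y) = (S^^k) ((S^^N) y)"
      by (metis add.commute comp_apply funpow_add)
    also have "\<dots> = 0" using y(1) K vec.linear_0[OF lp] by simp
    finally show "B ((S^^k) y) w = 0" using av orth by (simp add: addr zl)
  qed
  then show False using y(2) by simp
qed
end
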